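(* Fix an $s \times t$ matrix $A$ and let $\tilde{A}$ be its folding, of dimensions $s' \times t'$. There exist polynomials $p_1,p_2$ (depending only on $A$) such that for every $\epsilon > 0$, with $n_0 = p_1(\epsilon^{-1})$ and $\delta = 1/p_2(\epsilon^{-1})$, for every $n \geq n_0$, every $n \times n$ matrix $M$ that contains $\epsilon n^{s'+t'}$ copies of $\tilde{A}$ also contains $\delta n^{s+t}$ copies of $A$.
   Context: Matrices are over a fixed finite alphabet, with ordered rows and columns. A submatrix is obtained by deleting rows and columns while preserving order; a copy of a matrix $B$ in $M$ is a submatrix of $M$ equal to $B$. The predecessor of a row is the row immediately preceding it. The folding $\tilde{A}$ of $A$ is the matrix obtained from $A$ by deleting every row of $A$ that is equal to its predecessor, and then deleting every column of the resulting matrix that is equal to its predecessor (in that matrix). *)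

theory Defs
  imports Main "HOL-Computational_Algebra.Polynomial"
begin

text \<open>A matrix over alphabet 'a is a function nat => nat => 'a, together with
explicit dimensions (rows, columns); only entries with row index < rows and
column index < cols are relevant. Rows and columns are indexed from 0.\<close>

definition enum :: "nat set \<Rightarrow> nat \<Rightarrow> nat" where
  "enum S i = sorted_list_of_set S ! i"

definition copies ::
  "(nat \<Rightarrow> nat \<Rightarrow> 'a) \<Rightarrow> nat \<Rightarrow> (nat \<Rightarrow> nat \<Rightarrow> 'a) \<Rightarrow> nat \<Rightarrow> nat \<Rightarrow> (nat set \<times> nat set) set" where
  "copies M n B s t = {(R, C). R \<subseteq> {..<n} \<and> card R = s \<and> C \<subseteq> {..<n} \<and> card C = t \<and>
       (\<forall>i<s. \<forall>j<t. M (enum R i) (enum C j) = B i j)}"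

definition num_copies ::
  "(nat \<Rightarrow> nat \<Rightarrow> 'a) \<Rightarrow> nat \<Rightarrow> (nat \<Rightarrow> nat \<Rightarrow> 'a) \<Rightarrow> nat \<Rightarrow> nat \<Rightarrow> nat" where
  "num_copies M n B s t = card (copies M n B s t)"

definition fold_rows :: "(nat \<Rightarrow> nat \<Rightarrow> 'a) \<Rightarrow> nat \<Rightarrow> nat \<Rightarrow> nat set" where
  "fold_rows A s t = {i. i < s \<and> (i = 0 \<or> (\<exists>j<t. A i j \<noteq> A (i - 1) j))}"

definition fold_cols :: "(nat \<Rightarrow> nat \<Rightarrow> 'a) \<Rightarrow> nat \<Rightarrow> nat \<Rightarrow> nat set" where
  "fold_cols A s t = {j. j < t \<and> (j = 0 \<or> (\<exists>i\<in>fold_rows A s t. A i j \<noteq> A i (j - 1)))}"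

definition fold_nrows :: "(nat \<Rightarrow> nat \<Rightarrow> 'a) \<Rightarrow> nat \<Rightarrow> nat \<Rightarrow> nat" where
  "fold_nrows A s t = card (fold_rows A s t)"

definition fold_ncols :: "(nat \<Rightarrow> nat \<Rightarrow> 'a) \<Rightarrow> nat \<Rightarrow> nat \<Rightarrow> nat" where
  "fold_ncols A s t = card (fold_cols A s t)"

definition folding :: "(nat \<Rightarrow> nat \<Rightarrow> 'a) \<Rightarrow> nat \<Rightarrow> nat \<Rightarrow> (nat \<Rightarrow> nat \<Rightarrow> 'a)" where
  "folding A s t = (\<lambda>i j. A (enum (fold_rows A s t) i) (enum (fold_cols A s t) j))"

end

theory Submission
  imports Defs "HOL-Analysis.Convex"
begin


definition lcop :: "(nat \<Rightarrow> nat \<Rightarrow> 'a) \<Rightarrow> nat \<Rightarrow> (nat \<Rightarrow> nat \<Rightarrow> 'a) \<Rightarrow> nat \<Rightarrow> nat \<Rightarrow> (nat list \<times> nat list) set" where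
  "lcop M n B a b = {(rs,cs). length rs = a \<and> length cs = b \<and> sorted_wrt (<) rs \<and> sorted_wrt (<) cs
     \<and> set rs \<subseteq> {..<n} \<and> set cs \<subseteq> {..<n} \<and> (\<forall>i<a. \<forall>j<b. M (rs!i) (cs!j) = B i j)}"

lemma lcop_sub: "lcop M n B a b \<subseteq> {xs. set xs \<subseteq> {..<n} \<and> length xs = a} \<times> {xs. set xs \<subseteq> {..<n} \<and> length xs = b}"
  unfolding lcop_def by auto

lemma lcop_finite: "finite (lcop M n B a b)"
  by (rule finite_subset[OF lcop_sub]) (simp add: finite_lists_length_eq)

lemma lcop_card_le: "card (lcop M n B a b) \<le> n^a * n^b"
proof -
  have "card (lcop M n B a b) \<le> card ({xs. set xs \<subseteq> {..<n} \<and> length xs = a} \<times> {xs. set xs \<subseteq> {..<n} \<and> length xs = b})"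
    by (rule card_mono[OF _ lcop_sub]) (simp add: finite_lists_length_eq)
  also have "\<dots> = n^a * n^b" by (simp add: card_cartesian_product card_lists_length_eq)
  finally show ?thesis .
qed

lemma copies_lcop: "card (copies M n B a b) = card (lcop M n B a b)"
proof -
  have "bij_betw (\<lambda>(R,C). (sorted_list_of_set R, sorted_list_of_set C)) (copies M n B a b) (lcop M n B a b)"
  proof (rule bij_betw_byWitness[where f' = "\<lambda>(rs,cs). (set rs, set cs)"])
    show "\<forall>x\<in>copies M n B a b. (\<lambda>(rs, cs). (set rs, set cs)) ((\<lambda>(R, C). (sorted_list_of_set R, sorted_list_of_set C)) x) = x"
      unfolding copies_def using finite_subset by fastforce
    show "\<forall>y\<in>lcop M n B a b. (\<lambda>(R, C). (sorted_list_of_set R, sorted_list_of_set C)) ((\<lambda>(rs, cs). (set rs, set cs)) y) = y"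
      unfolding lcop_def by (auto simp: sorted_list_of_set.idem_if_sorted_distinct strict_sorted_iff)
    show "(\<lambda>(R, C). (sorted_list_of_set R, sorted_list_of_set C)) ` copies M n B a b \<subseteq> lcop M n B a b"
      unfolding copies_def lcop_def enum_def using finite_subset
      by (force simp: strict_sorted_list_of_set)
    show "(\<lambda>(rs, cs). (set rs, set cs)) ` lcop M n B a b \<subseteq> copies M n B a b"
      unfolding copies_def lcop_def enum_def
      by (auto simp: sorted_list_of_set.idem_if_sorted_distinct strict_sorted_iff distinct_card)
  qed
  thus ?thesis by (rule bij_betw_same_card)
qed

lemma lcop_transpose: "card (lcop M n B a b) = card (lcop (\<lambda>i j. M j i) n (\<lambda>i j. B j i) b a)"
proof -
  have "lcop (\<lambda>i j. M j i) n (\<lambda>i j. B j i) b a = (\<lambda>(x,y). (y,x)) ` lcop M n B a b"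
    unfolding lcop_def by (auto simp: image_iff)
  moreover have "inj_on (\<lambda>(x,y). (y,x)) (lcop M n B a b)" by (auto simp: inj_on_def)
  ultimately show ?thesis by (simp add: card_image)
qed




lemma dup_construct:
  assumes k: "k < a" and AA: "\<forall>r<Suc a. \<forall>j<b. A r j = A' (if r \<le> k then r else r - 1) j"
    and x: "(u @ p # w, cs) \<in> lcop M n A' a b" and y: "(u @ q # w, cs) \<in> lcop M n A' a b"
    and u: "length u = k" and pq: "p < q"
  shows "(u @ p # q # w, cs) \<in> lcop M n A (Suc a) b"
proof -
  from x have la: "a = k + Suc (length w)" using u unfolding lcop_def by auto
  have X: "\<forall>i<a. \<forall>j<b. M ((u @ p # w) ! i) (cs ! j) = A' i j" using x unfolding lcop_def by auto
  have Y: "\<forall>i<a. \<forall>j<b. M ((u @ q # w) ! i) (cs ! j) = A' i j" using y unfolding lcop_def by auto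
  have ent: "M ((u @ p # q # w) ! i) (cs ! j) = A i j" if i: "i < Suc a" and j: "j < b" for i j
  proof -
    consider "i < k" | "i = k" | "i = Suc k" | "i > Suc k" by linarith
    then show ?thesis
    proof cases
      case 1
      with X[rule_format, of i j] u i j AA k show ?thesis by (auto simp: nth_append)
    next
      case 2
      with X[rule_format, of i j] u i j AA k show ?thesis by (auto simp: nth_append)
    next
      case 3
      with Y[rule_format, of k j] u i j AA k show ?thesis by (auto simp: nth_append)
    next
      case 4
      have e1: "(u @ p # q # w) ! i = (u @ p # w) ! (i - 1)"
        using 4 u by (auto simp: nth_append)
      have "M ((u @ p # w) ! (i - 1)) (cs ! j) = A' (i - 1) j"
        using x i j 4 unfolding lcop_def by auto
      moreover have "A i j = A' (i - 1) j" using AA i j 4 by auto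
      ultimately show ?thesis using e1 by simp
    qed
  qed
  show ?thesis
    using x y pq u la ent unfolding lcop_def
    by (auto simp: sorted_wrt_append)
qed




lemma decomp: "k < length rs \<Longrightarrow> rs = take k rs @ rs ! k # drop (Suc k) rs"
  by (simp add: id_take_nth_drop)

lemma dup_count:
  assumes k: "k < a" and AA: "\<forall>r<Suc a. \<forall>j<b. A r j = A' (if r \<le> k then r else r - 1) j"
  shows "card (lcop M n A' a b) ^ 2 \<le> (card (lcop M n A' a b) + 2 * card (lcop M n A (Suc a) b)) * (n^(a-1) * n^b)"
proof -
  define X where "X = lcop M n A' a b"
  define Y where "Y = lcop M n A (Suc a) b"
  define F where "F = (\<lambda>(rs::nat list, cs::nat list). (take k rs @ drop (Suc k) rs, cs))"
  define P where "P = {(x,y). x \<in> X \<and> y \<in> X \<and> F x = F y}"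
  define Pl where "Pl = {(x,y). (x,y) \<in> P \<and> fst x ! k < fst y ! k}"
  define g where "g = (\<lambda>((rs::nat list, cs::nat list), (rs'::nat list, cs'::nat list)). (take k rs @ rs ! k # rs' ! k # drop (Suc k) rs, cs))"
  define h1 where "h1 = (\<lambda>(zs::nat list, cs::nat list). (take k zs @ zs ! k # drop (Suc (Suc k)) zs, cs))"
  define h2 where "h2 = (\<lambda>(zs::nat list, cs::nat list). (take k zs @ zs ! (Suc k) # drop (Suc (Suc k)) zs, cs))"
  have finX: "finite X" unfolding X_def by (rule lcop_finite)
  have finY: "finite Y" unfolding Y_def by (rule lcop_finite)
  have lenX: "length (fst x) = a" if "x \<in> X" for x using that unfolding X_def lcop_def by auto
  have Pstruct: "fst x = take k (fst x) @ fst x ! k # drop (Suc k) (fst x) \<and>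
       fst y = take k (fst x) @ fst y ! k # drop (Suc k) (fst x) \<and> snd y = snd x \<and> length (take k (fst x)) = k"
    if "(x,y) \<in> P" for x y
  proof -
    from that have xX: "x \<in> X" and yX: "y \<in> X" and Fe: "F x = F y" unfolding P_def by auto
    have lx: "length (fst x) = a" and ly: "length (fst y) = a" using lenX xX yX by auto
    obtain rs cs where xe: "x = (rs,cs)" by fastforce
    obtain rs' cs' where ye: "y = (rs',cs')" by fastforce
    have "take k rs @ drop (Suc k) rs = take k rs' @ drop (Suc k) rs'" and "cs = cs'"
      using Fe unfolding F_def xe ye by auto
    moreover have "length (take k rs) = length (take k rs')" using lx ly k xe ye by simp
    ultimately have "take k rs = take k rs'" "drop (Suc k) rs = drop (Suc k) rs'"
      by (auto simp: append_eq_append_conv)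
    then show ?thesis using decomp[of k rs] decomp[of k rs'] lx ly k xe ye \<open>cs = cs'\<close> by simp
  qed
  have gY: "g ` Pl \<subseteq> Y"
  proof
    fix z assume "z \<in> g ` Pl"
    then obtain x y where xy: "(x,y) \<in> Pl" and z: "z = g (x,y)" by auto
    then have P: "(x,y) \<in> P" and lt: "fst x ! k < fst y ! k" unfolding Pl_def by auto
    have xX: "x \<in> X" and yX: "y \<in> X" using P unfolding P_def by auto
    note S = Pstruct[OF P]
    have "(take k (fst x) @ fst x ! k # drop (Suc k) (fst x), snd x) \<in> X"
      using xX S by (metis prod.collapse)
    moreover have "(take k (fst x) @ fst y ! k # drop (Suc k) (fst x), snd x) \<in> X"
      using yX S by (metis prod.collapse)
    ultimately have "(take k (fst x) @ fst x ! k # fst y ! k # drop (Suc k) (fst x), snd x) \<in> Y"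
      unfolding X_def Y_def using dup_construct[OF k AA] S lt by blast
    moreover have "z = (take k (fst x) @ fst x ! k # fst y ! k # drop (Suc k) (fst x), snd x)"
      unfolding z g_def by (simp add: case_prod_beta)
    ultimately show "z \<in> Y" by simp
  qed
  have hg: "h1 (g (x,y)) = x \<and> h2 (g (x,y)) = y" if "(x,y) \<in> P" for x y
  proof -
    note S = Pstruct[OF that]
    have "g (x,y) = (take k (fst x) @ fst x ! k # fst y ! k # drop (Suc k) (fst x), snd x)"
      unfolding g_def by (simp add: case_prod_beta)
    then show ?thesis unfolding h1_def h2_def using S
      by (auto simp: nth_append) (metis prod.collapse)+
  qed
  have ginj: "inj_on g Pl"
  proof (rule inj_onI)
    fix p1 p2 assume a1: "p1 \<in> Pl" and a2: "p2 \<in> Pl" and e: "g p1 = g p2"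
    obtain x1 y1 where p1: "p1 = (x1,y1)" by (cases p1) auto
    obtain x2 y2 where p2: "p2 = (x2,y2)" by (cases p2) auto
    have "(x1,y1) \<in> P" "(x2,y2) \<in> P" using a1 a2 p1 p2 unfolding Pl_def by auto
    then show "p1 = p2" using hg e p1 p2 by metis
  qed
  have cPl: "card Pl \<le> card Y" using card_inj_on_le[OF ginj gY finY] .
  have cPl2: "card ((\<lambda>(x,y). (y,x)) ` Pl) \<le> card Y" using cPl card_image_le
    by (metis (no_types, lifting) finite_subset gY finY finite_imageD ginj le_trans)
  have finPl: "finite Pl"
    using gY finY ginj finite_imageD finite_subset by blast
  have Psub: "P \<subseteq> (\<lambda>x. (x,x)) ` X \<union> Pl \<union> (\<lambda>(x,y). (y,x)) ` Pl"
  proof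
    fix z assume z: "z \<in> P"
    obtain x y where zxy: "z = (x,y)" by (cases z) auto
    have xX: "x \<in> X" using z zxy unfolding P_def by auto
    have P': "(y,x) \<in> P" using z zxy unfolding P_def by auto
    consider "fst x ! k = fst y ! k" | "fst x ! k < fst y ! k" | "fst y ! k < fst x ! k" by linarith
    then show "z \<in> (\<lambda>x. (x,x)) ` X \<union> Pl \<union> (\<lambda>(x,y). (y,x)) ` Pl"
    proof cases
      case 1
      with Pstruct[OF z[unfolded zxy]] have "x = y" by (metis prod.collapse)
      then show ?thesis using xX zxy by auto
    next
      case 2 then show ?thesis using z zxy unfolding Pl_def by auto
    next
      case 3
      then have "(y,x) \<in> Pl" using P' unfolding Pl_def by auto
      then show ?thesis using zxy by (auto simp: image_iff)
    qed
  qed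
  have cP: "card P \<le> card X + 2 * card Y"
  proof -
    have "card P \<le> card ((\<lambda>x. (x,x)) ` X \<union> Pl \<union> (\<lambda>(x,y). (y,x)) ` Pl)"
      by (rule card_mono[OF _ Psub]) (use finX finPl in auto)
    also have "\<dots> \<le> card ((\<lambda>x. (x,x)) ` X) + card Pl + card ((\<lambda>(x,y). (y,x)) ` Pl)"
      by (meson add_le_mono card_Un_le le_trans order_refl)
    also have "\<dots> \<le> card X + card Y + card Y" using card_image_le[OF finX] cPl cPl2 by (meson add_mono)
    finally show ?thesis by simp
  qed
  define d where "d = (\<lambda>f. card {x \<in> X. F x = f})"
  have cX: "card X = (\<Sum>f\<in>F ` X. d f)"
    unfolding d_def card_eq_sum using sum.image_gen[OF finX, of "\<lambda>_. 1::nat" F] by simp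
  have PSig: "P = Sigma X (\<lambda>x. {y \<in> X. F y = F x})" unfolding P_def by auto
  have cP2: "card P = (\<Sum>f\<in>F ` X. d f ^ 2)"
  proof -
    have "card P = (\<Sum>x\<in>X. d (F x))" unfolding PSig d_def using finX by simp
    also have "\<dots> = (\<Sum>f\<in>F ` X. \<Sum>x\<in>{x \<in> X. F x = f}. d (F x))"
      using sum.image_gen[OF finX] by blast
    also have "\<dots> = (\<Sum>f\<in>F ` X. \<Sum>x\<in>{x \<in> X. F x = f}. d f)"
      by (rule sum.cong) auto
    also have "\<dots> = (\<Sum>f\<in>F ` X. d f ^ 2)" unfolding d_def by (simp add: power2_eq_square)
    finally show ?thesis .
  qed
  have FX: "F ` X \<subseteq> {xs. set xs \<subseteq> {..<n} \<and> length xs = a - 1} \<times> {xs. set xs \<subseteq> {..<n} \<and> length xs = b}"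
  proof
    fix z assume "z \<in> F ` X"
    then obtain rs cs where rc: "(rs,cs) \<in> X" and z: "z = F (rs,cs)" by auto
    then have "length rs = a" "length cs = b" "set rs \<subseteq> {..<n}" "set cs \<subseteq> {..<n}"
      unfolding X_def lcop_def by auto
    then show "z \<in> {xs. set xs \<subseteq> {..<n} \<and> length xs = a - 1} \<times> {xs. set xs \<subseteq> {..<n} \<and> length xs = b}"
      unfolding z F_def using k set_take_subset[of k rs] set_drop_subset[of "Suc k" rs] by auto
  qed
  have cFX: "card (F ` X) \<le> n^(a-1) * n^b"
  proof -
    have "card (F ` X) \<le> card ({xs. set xs \<subseteq> {..<n} \<and> length xs = a - 1} \<times> {xs. set xs \<subseteq> {..<n} \<and> length xs = b})"
      by (rule card_mono[OF _ FX]) (simp add: finite_lists_length_eq)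
    also have "\<dots> = n^(a-1) * n^b" by (simp add: card_cartesian_product card_lists_length_eq)
    finally show ?thesis .
  qed
  have "real (card X) ^ 2 \<le> real (card P) * real (card (F ` X))"
  proof -
    have "real (card X) ^ 2 = (\<Sum>f\<in>F ` X. real (d f)) ^ 2" unfolding cX by simp
    also have "\<dots> \<le> (\<Sum>f\<in>F ` X. real (d f) ^ 2) * card (F ` X)" by (rule sum_squared_le_sum_of_squares)
    also have "\<dots> = real (card P) * real (card (F ` X))" unfolding cP2 by simp
    finally show ?thesis .
  qed
  also have "\<dots> \<le> real (card X + 2 * card Y) * real (n^(a-1) * n^b)"
    by (rule mult_mono) (use cP cFX in \<open>auto simp del: of_nat_power of_nat_mult simp: of_nat_le_iff\<close>)
  finally have "real (card X ^ 2) \<le> real ((card X + 2 * card Y) * (n^(a-1) * n^b))" by simp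
  then show ?thesis unfolding X_def Y_def by linarith
qed




lemma dup_arith:
  fixes x y m e nn :: real
  assumes h: "x^2 \<le> (x + 2*y) * m" and m: "m > 0" and e: "e > 0" and en: "nn * e \<ge> 2"
    and xb: "x \<ge> e * (nn * m)"
  shows "y \<ge> e^2/4 * (nn^2 * m)"
proof -
  have nn: "nn > 0" using en e by (metis mult_nonpos_nonneg not_le less_le_trans less_imp_le zero_less_numeral le_less_trans order_le_less_trans)
  have "e * (nn * m) > 0" using nn m e by simp
  then have x0: "x \<ge> 0" using xb by linarith
  have "2*y*m \<ge> x * (x - m)" using h by (simp add: algebra_simps power2_eq_square)
  moreover have "x - m \<ge> m * (nn * e / 2)"
  proof -
    have "x - m \<ge> m * (nn*e - 1)" using xb by (simp add: algebra_simps)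
    moreover have "m * (nn*e - 1) \<ge> m * (nn * e / 2)" using en m by (intro mult_left_mono) (auto simp: mult.commute)
    ultimately show ?thesis by linarith
  qed
  then have "x * (x - m) \<ge> x * (m * (nn * e / 2))" using x0 by (rule mult_left_mono)
  moreover have "x * (m * (nn * e / 2)) \<ge> (e * (nn * m)) * (m * (nn * e / 2))"
    using xb m e nn by (intro mult_right_mono) auto
  ultimately have "2*y*m \<ge> (e * (nn * m)) * (m * (nn * e / 2))" by linarith
  then have "(e^2/4 * (nn^2 * m)) * (2*m) \<le> y * (2*m)" by (simp add: algebra_simps power2_eq_square)
  then show ?thesis using m by (simp add: algebra_simps)
qed

lemma dup_bound:
  assumes k: "k < a" and AA: "\<forall>r<Suc a. \<forall>j<b. A r j = A' (if r \<le> k then r else r - 1) j"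
    and e: "e > 0" and en: "real n * e \<ge> 2"
    and X: "real (card (lcop M n A' a b)) \<ge> e * real n ^ (a + b)"
  shows "real (card (lcop M n A (Suc a) b)) \<ge> e^2/4 * real n ^ (Suc a + b)"
proof -
  define m where "m = real n ^ (a-1) * real n ^ b"
  have n0: "n \<noteq> 0"
  proof
    assume "n = 0" with en show False by simp
  qed
  have m0: "m > 0" using n0 unfolding m_def by simp
  obtain a' where a': "a = Suc a'" using k by (cases a) auto
  have p1: "real n ^ (a + b) = real n * m" unfolding m_def a' by (simp add: power_add)
  have p2: "real n ^ (Suc a + b) = real n ^ 2 * m" unfolding m_def a' by (simp add: power_add power2_eq_square)
  have c0: "card (lcop M n A' a b) ^ 2 \<le> (card (lcop M n A' a b) + 2 * card (lcop M n A (Suc a) b)) * (n^(a-1) * n^b)"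
    by (rule dup_count[OF k AA])
  have c: "real (card (lcop M n A' a b)) ^ 2 \<le> (real (card (lcop M n A' a b)) + 2 * real (card (lcop M n A (Suc a) b))) * m"
    unfolding m_def using c0[THEN of_nat_mono[where 'a=real]] by simp
  show ?thesis unfolding p2
    by (rule dup_arith[OF c m0 e en]) (use X p1 in simp)
qed




lemma ident_phi:
  assumes "0 < s \<Longrightarrow> \<phi> 0 = 0"
    and "\<forall>i. Suc i < s \<longrightarrow> \<phi> (Suc i) = \<phi> i \<or> \<phi> (Suc i) = Suc (\<phi> i)"
    and "\<not> (\<exists>i. Suc i < s \<and> \<phi> (Suc i) = \<phi> i)"
  shows "\<forall>i<s. \<phi> i = i"
proof (intro allI impI)
  fix i assume "i < s" then show "\<phi> i = i"
    by (induction i) (use assms in auto)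
qed

lemma nodup_case:
  assumes "0 < s \<Longrightarrow> \<phi> 0 = 0"
    and "\<forall>i. Suc i < s \<longrightarrow> \<phi> (Suc i) = \<phi> i \<or> \<phi> (Suc i) = Suc (\<phi> i)"
    and "s0 = (if s = 0 then 0 else Suc (\<phi> (s - 1)))"
    and AB: "\<forall>i<s. \<forall>j<t. A i j = B (\<phi> i) j"
    and "\<not> (\<exists>i. Suc i < s \<and> \<phi> (Suc i) = \<phi> i)"
  shows "s0 = s \<and> lcop M n A s t = lcop M n B s0 t"
proof -
  have id: "\<forall>i<s. \<phi> i = i" using ident_phi assms by blast
  have s0: "s0 = s" using assms(3) id by (cases s) auto
  have "\<forall>i<s. \<forall>j<t. A i j = B i j" using AB id by auto
  then show ?thesis unfolding lcop_def s0 by auto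
qed

definition good where
  "good A B s s0 t \<longleftrightarrow> (\<exists>c K D. 0 < c \<and> c \<le> 1 \<and> 1 \<le> K \<and> 0 \<le> D \<and>
     (\<forall>\<epsilon> n M. 0 < \<epsilon> \<longrightarrow> \<epsilon> \<le> 1 \<longrightarrow> D * (1/\<epsilon>)^K \<le> real n \<longrightarrow>
        \<epsilon> * real n ^ (s0 + t) \<le> real (card (lcop M n B s0 t)) \<longrightarrow>
        c * \<epsilon>^K * real n ^ (s + t) \<le> real (card (lcop M n A s t))))"

lemma good_of_eq: "(\<And>M n. lcop M n A s t = lcop M n B s0 t) \<Longrightarrow> s0 = s \<Longrightarrow> good A B s s0 t"
  unfolding good_def by (intro exI[of _ 1] exI[of _ "1::nat"] exI[of _ 0]) auto

lemma good_step:
  assumes g: "good A' B a s0 t" and k: "k < a"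
    and AA: "\<forall>r<Suc a. \<forall>j<t. A r j = A' (if r \<le> k then r else r - 1) j"
  shows "good A B (Suc a) s0 t"
proof -
  obtain c1 K1 D1 where c1: "0 < c1" "c1 \<le> 1" and K1: "1 \<le> K1" and D1: "0 \<le> D1"
    and H: "\<And>\<epsilon> n M. 0 < \<epsilon> \<Longrightarrow> \<epsilon> \<le> 1 \<Longrightarrow> D1 * (1/\<epsilon>)^K1 \<le> real n \<Longrightarrow>
        \<epsilon> * real n ^ (s0 + t) \<le> real (card (lcop M n B s0 t)) \<Longrightarrow>
        c1 * \<epsilon>^K1 * real n ^ (a + t) \<le> real (card (lcop M n A' a t))"
    using g unfolding good_def by blast
  define D where "D = D1 + 2/c1"
  have cc: "0 < c1^2/4" using c1 by simp
  have "c1^2 \<le> 1" using c1 by (simp add: power_le_one)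
  then have cc2: "c1^2/4 \<le> 1" by simp
  have KK: "1 \<le> 2*K1" using K1 by simp
  have DD: "0 \<le> D" using D1 c1 unfolding D_def by simp
  have main: "\<forall>\<epsilon> n M. 0 < \<epsilon> \<longrightarrow> \<epsilon> \<le> 1 \<longrightarrow> D * (1/\<epsilon>)^(2*K1) \<le> real n \<longrightarrow>
        \<epsilon> * real n ^ (s0 + t) \<le> real (card (lcop M n B s0 t)) \<longrightarrow>
        c1^2/4 * \<epsilon>^(2*K1) * real n ^ (Suc a + t) \<le> real (card (lcop M n A (Suc a) t))"
  proof (intro allI impI)
    fix \<epsilon> :: real and n :: nat and M :: "nat \<Rightarrow> nat \<Rightarrow> 'a"
    assume e0: "0 < \<epsilon>" and e1: "\<epsilon> \<le> 1" and nD: "D * (1/\<epsilon>)^(2*K1) \<le> real n"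
      and hB: "\<epsilon> * real n ^ (s0 + t) \<le> real (card (lcop M n B s0 t))"
    have q: "1 \<le> 1/\<epsilon>" using e0 e1 by simp
    have pw: "(1/\<epsilon>)^K1 \<le> (1/\<epsilon>)^(2*K1)" by (rule power_increasing) (use q in auto)
    have pw0: "0 \<le> (1/\<epsilon>)^K1" using e0 by simp
    have "D1 * (1/\<epsilon>)^K1 \<le> D * (1/\<epsilon>)^(2*K1)"
      using pw pw0 D1 c1 unfolding D_def
      by (smt (verit, best) divide_nonneg_nonneg mult_left_mono mult_right_mono)
    then have n1: "D1 * (1/\<epsilon>)^K1 \<le> real n" using nD by linarith
    have "2/c1 * (1/\<epsilon>)^K1 \<le> D * (1/\<epsilon>)^(2*K1)"
      using pw pw0 D1 c1 unfolding D_def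
      by (smt (verit, best) divide_nonneg_nonneg mult_left_mono mult_right_mono)
    then have n2: "2/c1 * (1/\<epsilon>)^K1 \<le> real n" using nD by linarith
    define e where "e = c1 * \<epsilon>^K1"
    have e: "e > 0" unfolding e_def using c1 e0 by simp
    have "2/c1 * (1/\<epsilon>)^K1 * e \<le> real n * e" using n2 e by (intro mult_right_mono) auto
    moreover have "2/c1 * (1/\<epsilon>)^K1 * e = 2" unfolding e_def using c1 e0
      by (simp add: power_one_over field_simps)
    ultimately have en: "real n * e \<ge> 2" by simp
    have X: "real (card (lcop M n A' a t)) \<ge> e * real n ^ (a + t)"
      using H[OF e0 e1 n1 hB] unfolding e_def by simp
    have "real (card (lcop M n A (Suc a) t)) \<ge> e^2/4 * real n ^ (Suc a + t)"
      by (rule dup_bound[OF k AA e en X])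
    moreover have "e^2/4 = c1^2/4 * \<epsilon>^(2*K1)" unfolding e_def
      by (simp add: power_mult_distrib power_mult[symmetric] mult.commute)
    ultimately show "c1^2/4 * \<epsilon>^(2*K1) * real n ^ (Suc a + t) \<le> real (card (lcop M n A (Suc a) t))"
      by simp
  qed
  show ?thesis unfolding good_def using cc cc2 KK DD main by blast
qed

lemma good_refl: "good A A s s t"
  unfolding good_def by (intro exI[of _ 1] exI[of _ "1::nat"] exI[of _ 0]) auto



lemma transfer:
  assumes "0 < s \<Longrightarrow> \<phi> 0 = 0"
    and "\<forall>i. Suc i < s \<longrightarrow> \<phi> (Suc i) = \<phi> i \<or> \<phi> (Suc i) = Suc (\<phi> i)"
    and "s0 = (if s = 0 then 0 else Suc (\<phi> (s - 1)))"
    and "\<forall>i<s. \<forall>j<t. A i j = B (\<phi> i) j"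
  shows "good A B s s0 t"
  using assms
proof (induction s arbitrary: A \<phi> s0)
  case 0
  have "\<And>M n. s0 = 0 \<and> lcop M n A 0 t = lcop M n B s0 t"
    using nodup_case[of 0 \<phi> s0 t A B] 0 by auto
  then show ?case using good_of_eq by metis
next
  case (Suc s1)
  show ?case
  proof (cases "\<exists>i. Suc i < Suc s1 \<and> \<phi> (Suc i) = \<phi> i")
    case False
    have "\<And>M n. s0 = Suc s1 \<and> lcop M n A (Suc s1) t = lcop M n B s0 t"
      using nodup_case[of "Suc s1" \<phi> s0 t A B] Suc.prems False by blast
    then show ?thesis using good_of_eq by metis
  next
    case True
    then obtain i where i: "Suc i < Suc s1" and ph: "\<phi> (Suc i) = \<phi> i" by blast
    define A' where "A' = (\<lambda>r j. A (if r \<le> i then r else Suc r) j)"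
    define \<phi>' where "\<phi>' = (\<lambda>r. \<phi> (if r \<le> i then r else Suc r))"
    have p1: "0 < s1 \<Longrightarrow> \<phi>' 0 = 0" using Suc.prems(1) unfolding \<phi>'_def by simp
    have p2: "\<forall>r. Suc r < s1 \<longrightarrow> \<phi>' (Suc r) = \<phi>' r \<or> \<phi>' (Suc r) = Suc (\<phi>' r)"
    proof (intro allI impI)
      fix r assume r: "Suc r < s1"
      consider "Suc r \<le> i" | "r = i" | "r > i" by linarith
      then show "\<phi>' (Suc r) = \<phi>' r \<or> \<phi>' (Suc r) = Suc (\<phi>' r)"
      proof cases
        case 1 then show ?thesis using Suc.prems(2) r unfolding \<phi>'_def by auto
      next
        case 2 then show ?thesis using Suc.prems(2)[rule_format, of "Suc i"] r ph unfolding \<phi>'_def by auto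
      next
        case 3 then show ?thesis using Suc.prems(2)[rule_format, of "Suc r"] r unfolding \<phi>'_def by auto
      qed
    qed
    have p3: "s0 = (if s1 = 0 then 0 else Suc (\<phi>' (s1 - 1)))"
    proof -
      have s1: "s1 \<noteq> 0" using i by simp
      have "\<phi>' (s1 - 1) = \<phi> s1"
      proof (cases "s1 - 1 \<le> i")
        case True then have "s1 = Suc i" using i by linarith
        then show ?thesis using ph True unfolding \<phi>'_def by simp
      next
        case False then show ?thesis using s1 unfolding \<phi>'_def by simp
      qed
      then show ?thesis using Suc.prems(3) s1 by simp
    qed
    have p4: "\<forall>r<s1. \<forall>j<t. A' r j = B (\<phi>' r) j"
      using Suc.prems(4) unfolding A'_def \<phi>'_def by auto
    have g': "good A' B s1 s0 t" by (rule Suc.IH[OF p1 p2 p3 p4])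
    have AA: "\<forall>r<Suc s1. \<forall>j<t. A r j = A' (if r \<le> i then r else r - 1) j"
    proof (intro allI impI)
      fix r j assume r: "r < Suc s1" and j: "j < t"
      consider "r \<le> i" | "r = Suc i" | "r > Suc i" by linarith
      then show "A r j = A' (if r \<le> i then r else r - 1) j"
      proof cases
        case 1 then show ?thesis unfolding A'_def by simp
      next
        case 2
        have "A (Suc i) j = B (\<phi> (Suc i)) j" using Suc.prems(4) i j by blast
        moreover have "A i j = B (\<phi> i) j" using Suc.prems(4) i j by simp
        ultimately show ?thesis using 2 ph unfolding A'_def by simp
      next
        case 3
        then have "\<not> r - 1 \<le> i" "Suc (r-1) = r" by auto
        then show ?thesis using 3 unfolding A'_def by simp
      qed
    qed
    show ?thesis by (rule good_step[OF g' _ AA]) (use i in simp)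
  qed
qed




lemma enum_card_less:
  assumes fin: "finite R" and x: "x \<in> R"
  shows "enum R (card {r\<in>R. r < x}) = x"
proof -
  define xs where "xs = sorted_list_of_set R"
  have ss: "sorted_wrt (<) xs" unfolding xs_def by (simp add: strict_sorted_list_of_set)
  have sx: "set xs = R" unfolding xs_def using fin by simp
  obtain p where p: "p < length xs" "xs ! p = x" using x sx by (metis in_set_conv_nth)
  have "{r\<in>R. r < x} = set (take p xs)"
  proof
    show "{r\<in>R. r < x} \<subseteq> set (take p xs)"
    proof
      fix r assume r: "r \<in> {r\<in>R. r < x}"
      have "r \<in> set xs" using r sx by auto
      then obtain q where q: "q < length xs" "xs ! q = r" by (auto simp: in_set_conv_nth)
      have "q < p"
      proof (rule ccontr)
        assume "\<not> q < p"
        then have "p = q \<or> p < q" by linarith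
        then have "x \<le> r" using sorted_wrt_nth_less[OF ss, of p q] q p by auto
        then show False using r by simp
      qed
      then have "q < length (take p xs)" "take p xs ! q = r" using q by auto
      then show "r \<in> set (take p xs)" by (metis nth_mem)
    qed
    show "set (take p xs) \<subseteq> {r\<in>R. r < x}"
    proof
      fix r assume "r \<in> set (take p xs)"
      then obtain q where q: "q < p" "xs ! q = r" using p by (auto simp: in_set_conv_nth)
      then show "r \<in> {r\<in>R. r < x}" using sorted_wrt_nth_less[OF ss, of q p] p sx by (auto intro: nth_mem)
    qed
  qed
  moreover have "card (set (take p xs)) = p"
    using ss p by (simp add: distinct_card strict_sorted_iff)
  ultimately show ?thesis using p unfolding enum_def xs_def by simp
qed

lemma fold_phi:
  assumes Rs: "R \<subseteq> {..<s}" and R0: "0 < s \<Longrightarrow> 0 \<in> R"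
    and Rd: "\<forall>i<s. i \<notin> R \<longrightarrow> 0 < i \<and> (\<forall>j<t. W i j = W (i - 1) j)"
  defines "\<phi> \<equiv> \<lambda>i. card {r\<in>R. r \<le> i} - 1"
  shows "0 < s \<Longrightarrow> \<phi> 0 = 0"
    and "\<forall>i. Suc i < s \<longrightarrow> \<phi> (Suc i) = \<phi> i \<or> \<phi> (Suc i) = Suc (\<phi> i)"
    and "card R = (if s = 0 then 0 else Suc (\<phi> (s - 1)))"
    and "\<forall>i<s. \<forall>j<t. W i j = W (enum R (\<phi> i)) j"
proof -
  have fin: "finite R" using Rs finite_subset by blast
  have finS: "finite {r\<in>R. r \<le> i}" for i using fin by simp
  have pos: "card {r\<in>R. r \<le> i} \<ge> 1" if "0 < s" for i
  proof -
    have "0 \<in> {r\<in>R. r \<le> i}" using R0 that by simp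
    then have "card {r\<in>R. r \<le> i} > 0" using finS[of i] card_gt_0_iff by blast
    then show ?thesis by simp
  qed
  show p0: "0 < s \<Longrightarrow> \<phi> 0 = 0"
  proof -
    assume s: "0 < s"
    have "{r\<in>R. r \<le> 0} = {0}" using R0[OF s] by auto
    then show "\<phi> 0 = 0" unfolding \<phi>_def by simp
  qed
  have stepc: "card {r\<in>R. r \<le> Suc i} = card {r\<in>R. r \<le> i} + (if Suc i \<in> R then 1 else 0)" for i
  proof (cases "Suc i \<in> R")
    case True
    then have "{r\<in>R. r \<le> Suc i} = insert (Suc i) {r\<in>R. r \<le> i}" by auto
    then show ?thesis using True finS[of i] by simp
  next
    case False
    then have "{r\<in>R. r \<le> Suc i} = {r\<in>R. r \<le> i}" using le_Suc_eq by auto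
    then show ?thesis using False by simp
  qed
  have stepphi: "\<phi> (Suc i) = \<phi> i + (if Suc i \<in> R then 1 else 0)" if "0 < s" for i
    unfolding \<phi>_def using stepc[of i] pos[OF that, of i] by simp
  show "\<forall>i. Suc i < s \<longrightarrow> \<phi> (Suc i) = \<phi> i \<or> \<phi> (Suc i) = Suc (\<phi> i)"
    using stepphi by auto
  show "card R = (if s = 0 then 0 else Suc (\<phi> (s - 1)))"
  proof (cases "s = 0")
    case True then show ?thesis using Rs by auto
  next
    case False
    have "{r\<in>R. r \<le> s - 1} = R" using Rs by auto
    then show ?thesis using False pos[of "s-1"] unfolding \<phi>_def by simp
  qed
  have phiR: "\<phi> x = card {r\<in>R. r < x}" if "x \<in> R" for x
  proof -
    have "{r\<in>R. r \<le> x} = insert x {r\<in>R. r < x}" using that by auto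
    moreover have "finite {r\<in>R. r < x}" using fin by simp
    ultimately show ?thesis unfolding \<phi>_def by simp
  qed
  show "\<forall>i<s. \<forall>j<t. W i j = W (enum R (\<phi> i)) j"
  proof (intro allI impI)
    fix i j assume i: "i < s" and j: "j < t"
    then show "W i j = W (enum R (\<phi> i)) j"
    proof (induction i)
      case 0
      then have "0 \<in> R" using R0 by simp
      then have "enum R (\<phi> 0) = 0" using phiR[of 0] enum_card_less[OF fin, of 0] by simp
      then show ?case by simp
    next
      case (Suc i)
      show ?case
      proof (cases "Suc i \<in> R")
        case True
        then have "enum R (\<phi> (Suc i)) = Suc i" using phiR[of "Suc i"] enum_card_less[OF fin, of "Suc i"] by simp
        then show ?thesis by simp
      next
        case False
        then have "W (Suc i) j = W i j" using Rd Suc.prems by auto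
        moreover have "\<phi> (Suc i) = \<phi> i" using stepphi[of i] False Suc.prems by simp
        ultimately show ?thesis using Suc.IH Suc.prems by simp
      qed
    qed
  qed
qed




lemma enum_in: "finite R \<Longrightarrow> i < card R \<Longrightarrow> enum R i \<in> R"
  unfolding enum_def by (metis length_sorted_list_of_set nth_mem set_sorted_list_of_set)



lemma good_compose:
  assumes g1: "good (\<lambda>j i. C i j) (\<lambda>j i. F i j) t t' s'" and g2: "good A C s s' t"
  shows "\<exists>p1 p2 :: real poly.
    (\<forall>\<epsilon>::real. \<epsilon> > 0 \<longrightarrow> poly p2 (1 / \<epsilon>) > 0) \<and>
    (\<forall>\<epsilon>::real. \<epsilon> > 0 \<longrightarrow>
      (\<forall>n::nat. real n \<ge> poly p1 (1 / \<epsilon>) \<longrightarrow>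
        (\<forall>M :: nat \<Rightarrow> nat \<Rightarrow> 'a.
           real (num_copies M n F s' t') \<ge> \<epsilon> * real n ^ (s' + t')
           \<longrightarrow> real (num_copies M n A s t) \<ge> (1 / poly p2 (1 / \<epsilon>)) * real n ^ (s + t))))"
proof -
  obtain c1 K1 D1 where c1: "0 < c1" "c1 \<le> 1" and K1: "1 \<le> K1" and D1: "0 \<le> D1"
    and H1: "\<And>\<epsilon> n (M::nat \<Rightarrow> nat \<Rightarrow> 'a). 0 < \<epsilon> \<Longrightarrow> \<epsilon> \<le> 1 \<Longrightarrow> D1 * (1/\<epsilon>)^K1 \<le> real n \<Longrightarrow>
        \<epsilon> * real n ^ (t' + s') \<le> real (card (lcop M n (\<lambda>j i. F i j) t' s')) \<Longrightarrow>
        c1 * \<epsilon>^K1 * real n ^ (t + s') \<le> real (card (lcop M n (\<lambda>j i. C i j) t s'))"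
    using g1 unfolding good_def by blast
  obtain c2 K2 D2 where c2: "0 < c2" "c2 \<le> 1" and K2: "1 \<le> K2" and D2: "0 \<le> D2"
    and H2: "\<And>\<epsilon> n (M::nat \<Rightarrow> nat \<Rightarrow> 'a). 0 < \<epsilon> \<Longrightarrow> \<epsilon> \<le> 1 \<Longrightarrow> D2 * (1/\<epsilon>)^K2 \<le> real n \<Longrightarrow>
        \<epsilon> * real n ^ (s' + t) \<le> real (card (lcop M n C s' t)) \<Longrightarrow>
        c2 * \<epsilon>^K2 * real n ^ (s + t) \<le> real (card (lcop M n A s t))"
    using g2 unfolding good_def by blast
  define K where "K = K1 * K2"
  define c where "c = c2 * c1^K2"
  define D where "D = D1 + D2 / c1^K2"
  have c0: "c > 0" unfolding c_def using c1 c2 by simp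
  have D0: "D \<ge> 0" unfolding D_def using D1 D2 c1 by simp
  have KK: "K1 \<le> K" unfolding K_def using K2 by simp
  have P1: "\<forall>\<epsilon>::real. \<epsilon> > 0 \<longrightarrow> poly (monom (1/c) K) (1/\<epsilon>) > 0" using c0 by (simp add: poly_monom)
  have P2: "\<forall>\<epsilon>::real. \<epsilon> > 0 \<longrightarrow>
      (\<forall>n::nat. real n \<ge> poly (monom D K + [:1:]) (1 / \<epsilon>) \<longrightarrow>
        (\<forall>M :: nat \<Rightarrow> nat \<Rightarrow> 'a.
           real (num_copies M n F s' t') \<ge> \<epsilon> * real n ^ (s' + t')
           \<longrightarrow> real (num_copies M n A s t) \<ge> (1 / poly (monom (1/c) K) (1 / \<epsilon>)) * real n ^ (s + t)))"
  proof (intro allI impI)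
    fix \<epsilon> :: real and n :: nat and M :: "nat \<Rightarrow> nat \<Rightarrow> 'a"
    assume e0: "\<epsilon> > 0" and nb: "real n \<ge> poly (monom D K + [:1:]) (1 / \<epsilon>)"
      and hyp: "real (num_copies M n F s' t') \<ge> \<epsilon> * real n ^ (s' + t')"
    have nb': "real n \<ge> D * (1/\<epsilon>)^K + 1" using nb by (simp add: poly_monom)
    have pe: "(1/\<epsilon>)^K \<ge> 0" using e0 by simp
    have n1: "real n \<ge> 1" using nb' D0 pe by (smt (verit) mult_nonneg_nonneg)
    have hypl: "real (card (lcop M n F s' t')) \<ge> \<epsilon> * real n ^ (s' + t')"
      using hyp unfolding num_copies_def copies_lcop .
    show "real (num_copies M n A s t) \<ge> (1 / poly (monom (1/c) K) (1 / \<epsilon>)) * real n ^ (s + t)"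
    proof (cases "\<epsilon> \<le> 1")
      case False
      have "card (lcop M n F s' t') \<le> n^s' * n^t'" by (rule lcop_card_le)
      then have "real (card (lcop M n F s' t')) \<le> real n ^ (s' + t')"
        by (metis of_nat_le_iff of_nat_mult of_nat_power power_add)
      moreover have "real n ^ (s' + t') \<ge> 1" using n1 by simp
      moreover have "\<epsilon> * real n ^ (s' + t') > real n ^ (s' + t')"
      proof -
        have "1 * real n ^ (s' + t') < \<epsilon> * real n ^ (s' + t')"
        proof (rule mult_strict_right_mono)
          show "0 < real n ^ (s' + t')" using calculation(2) by linarith
        qed (use False in auto)
        then show ?thesis by simp
      qed
      ultimately show ?thesis using hypl by linarith
    next
      case True
      have q: "1 \<le> 1/\<epsilon>" using e0 True by simp
      have pw: "(1/\<epsilon>)^K1 \<le> (1/\<epsilon>)^K" by (rule power_increasing[OF KK]) (use q in auto)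
      have "D1 * (1/\<epsilon>)^K1 \<le> D * (1/\<epsilon>)^K"
        using pw D1 D2 c1 unfolding D_def
        by (smt (verit, best) divide_nonneg_nonneg mult_left_mono mult_right_mono zero_le_power pe)
      then have nD1: "D1 * (1/\<epsilon>)^K1 \<le> real n" using nb' by linarith
      have h1: "\<epsilon> * real n ^ (t' + s') \<le> real (card (lcop (\<lambda>i j. M j i) n (\<lambda>j i. F i j) t' s'))"
        using hypl lcop_transpose[of M n F s' t'] by (simp add: add.commute)
      have r1: "c1 * \<epsilon>^K1 * real n ^ (t + s') \<le> real (card (lcop (\<lambda>i j. M j i) n (\<lambda>j i. C i j) t s'))"
        by (rule H1[OF e0 True nD1 h1])
      define e where "e = c1 * \<epsilon>^K1"
      have e0': "0 < e" unfolding e_def using c1 e0 by simp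
      have e1': "e \<le> 1"
      proof -
        have "\<epsilon>^K1 \<le> 1" using True e0 by (simp add: power_le_one)
        then show ?thesis using c1 e0 unfolding e_def by (simp add: mult_le_one)
      qed
      have "card (lcop (\<lambda>i j. M j i) n (\<lambda>j i. C i j) t s') = card (lcop M n C s' t)"
        using lcop_transpose[of "\<lambda>i j. M j i" n "\<lambda>j i. C i j" t s'] by simp
      then have h2: "e * real n ^ (s' + t) \<le> real (card (lcop M n C s' t))"
        using r1 unfolding e_def by (simp add: add.commute)
      have "(1/e)^K2 = (1/c1)^K2 * (1/\<epsilon>)^K" unfolding e_def K_def
        by (simp add: power_mult power_mult_distrib power_one_over)
      then have "D2 * (1/e)^K2 = D2 / c1^K2 * (1/\<epsilon>)^K" by (simp add: power_one_over)
      also have "\<dots> \<le> D * (1/\<epsilon>)^K"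
      proof -
        have "0 \<le> D1 * (1/\<epsilon>)^K" by (rule mult_nonneg_nonneg[OF D1 pe])
        then show ?thesis unfolding D_def distrib_right by linarith
      qed
      finally have nD2: "D2 * (1/e)^K2 \<le> real n" using nb' by linarith
      have r2: "c2 * e^K2 * real n ^ (s + t) \<le> real (card (lcop M n A s t))"
        by (rule H2[OF e0' e1' nD2 h2])
      have "1 / poly (monom (1/c) K) (1 / \<epsilon>) = c * \<epsilon>^K"
        using c0 e0 by (simp add: poly_monom power_one_over)
      also have "\<dots> = c2 * e^K2" unfolding c_def e_def K_def
        by (simp add: power_mult power_mult_distrib)
      finally show ?thesis using r2 unfolding num_copies_def copies_lcop by simp
    qed
  qed
  show ?thesis using P1 P2 by blast
qed




theorem lemma3p1:
  fixes A :: "nat \<Rightarrow> nat \<Rightarrow> 'a::finite" and s t :: nat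
  shows "\<exists>p1 p2 :: real poly.
    (\<forall>\<epsilon>::real. \<epsilon> > 0 \<longrightarrow> poly p2 (1 / \<epsilon>) > 0) \<and>
    (\<forall>\<epsilon>::real. \<epsilon> > 0 \<longrightarrow>
      (\<forall>n::nat. real n \<ge> poly p1 (1 / \<epsilon>) \<longrightarrow>
        (\<forall>M :: nat \<Rightarrow> nat \<Rightarrow> 'a.
           real (num_copies M n (folding A s t) (fold_nrows A s t) (fold_ncols A s t))
             \<ge> \<epsilon> * real n ^ (fold_nrows A s t + fold_ncols A s t)
           \<longrightarrow> real (num_copies M n A s t)
             \<ge> (1 / poly p2 (1 / \<epsilon>)) * real n ^ (s + t))))"
proof -
  define R where "R = fold_rows A s t"
  define Q where "Q = fold_cols A s t"
  define C where "C = (\<lambda>i j. A (enum R i) j)"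
  define F where "F = folding A s t"
  have sR: "fold_nrows A s t = card R" unfolding R_def fold_nrows_def by simp
  have tQ: "fold_ncols A s t = card Q" unfolding Q_def fold_ncols_def by simp
  have Rs: "R \<subseteq> {..<s}" unfolding R_def fold_rows_def by auto
  have Qt: "Q \<subseteq> {..<t}" unfolding Q_def fold_cols_def by auto
  have finR: "finite R" using Rs finite_subset by blast
  have Qd: "\<forall>j<t. j \<notin> Q \<longrightarrow> 0 < j \<and> (\<forall>i<card R. (\<lambda>j i. C i j) j i = (\<lambda>j i. C i j) (j - 1) i)"
  proof (intro allI impI)
    fix j assume j: "j < t" and jQ: "j \<notin> Q"
    then have j0: "j \<noteq> 0" and eq: "\<forall>i\<in>R. A i j = A i (j - 1)"
      unfolding Q_def fold_cols_def R_def by auto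
    show "0 < j \<and> (\<forall>i<card R. (\<lambda>j i. C i j) j i = (\<lambda>j i. C i j) (j - 1) i)"
      using j0 eq enum_in[OF finR] unfolding C_def by auto
  qed
  define \<gamma> where "\<gamma> = (\<lambda>i. card {r\<in>Q. r \<le> i} - 1)"
  note FQ = fold_phi[of Q t "card R" "\<lambda>j i. C i j", folded \<gamma>_def, OF Qt _ Qd]
  have Q0: "0 < t \<Longrightarrow> 0 \<in> Q" unfolding Q_def fold_cols_def by auto
  have g1: "good (\<lambda>j i. C i j) (\<lambda>j i. F i j) t (card Q) (card R)"
  proof (rule transfer)
    show "0 < t \<Longrightarrow> \<gamma> 0 = 0" unfolding \<gamma>_def using FQ(1) Q0 by blast
    show "\<forall>i. Suc i < t \<longrightarrow> \<gamma> (Suc i) = \<gamma> i \<or> \<gamma> (Suc i) = Suc (\<gamma> i)" unfolding \<gamma>_def using FQ(2) Q0 by blast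
    show "card Q = (if t = 0 then 0 else Suc (\<gamma> (t - 1)))" unfolding \<gamma>_def using FQ(3) Q0 by blast
    have "\<forall>j<t. \<forall>i<card R. C i j = C i (enum Q (\<gamma> j))" unfolding \<gamma>_def using FQ(4) Q0 by blast
    then show "\<forall>j<t. \<forall>i<card R. C i j = F i (\<gamma> j)"
      unfolding C_def F_def folding_def R_def Q_def by simp
  qed
  have Rd: "\<forall>i<s. i \<notin> R \<longrightarrow> 0 < i \<and> (\<forall>j<t. A i j = A (i - 1) j)"
    unfolding R_def fold_rows_def by auto
  have R0: "0 < s \<Longrightarrow> 0 \<in> R" unfolding R_def fold_rows_def by auto
  define \<phi> where "\<phi> = (\<lambda>i. card {r\<in>R. r \<le> i} - 1)"
  note FR = fold_phi[of R s t A, folded \<phi>_def, OF Rs R0 Rd]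
  have g2: "good A C s (card R) t"
  proof (rule transfer)
    show "0 < s \<Longrightarrow> \<phi> 0 = 0" unfolding \<phi>_def using FR(1) by blast
    show "\<forall>i. Suc i < s \<longrightarrow> \<phi> (Suc i) = \<phi> i \<or> \<phi> (Suc i) = Suc (\<phi> i)" unfolding \<phi>_def using FR(2) by blast
    show "card R = (if s = 0 then 0 else Suc (\<phi> (s - 1)))" unfolding \<phi>_def using FR(3) by blast
    show "\<forall>i<s. \<forall>j<t. A i j = C (\<phi> i) j" using FR(4) unfolding C_def \<phi>_def by blast
  qed
  show ?thesis using good_compose[OF g1 g2] unfolding sR tQ F_def by blast
qed


end
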